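(* Let $P$ be the ReLU activation set realized by a fixed input $x_0$ and weight $w_0$, and let $u$ be the (nonzero) virtual polynomial of type $(i,L)$ induced by $P$. Then $u$ has an irreducible factorization $u=g_1\cdots g_n$ into $n$ irreducible non-constant real polynomials if and only if the $P$-active neural network has exactly $n-1$ layers containing a unique (active) node. Moreover, if $\ell_1<\dots<\ell_{n-1}$ are these layers, set $\ell_0=1$ and $\ell_n=L$. Then, up to constant factors, each factor $g_s$ is the output of the sub-network of the $P$-active network that starts at layer $\ell_{s-1}$ and ends at layer $\ell_s$. For $s=1$ this is the output of the unique node of layer $\ell_1$ computed from the input $x_0$. For $s\ge2$ it is the linear-network output at layer $\ell_s$ (at the unique node, respectively at output node $i$ when $s=n$) obtained by feeding the value $1$ into the unique node of layer $\ell_{s-1}$.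
   Context: Network: a fully connected feedforward network with $L$ layers of widths $d_1,\dots,d_L$ and no biases. The weights are the entries $w^{(k)}_{(i,j)}$ of $W_k\in\mathbb{R}^{d_{k+1}\times d_k}$, $k=1,\dots,L-1$; $w^{(k)}_{(i,j)}$ is the weight on the edge from node $i$ of layer $k$ to node $j$ of layer $k+1$. All weights together form $w\in\mathbb{R}^N$. Forward pass: $x^{(1)}=x$; $z^{(k+1)}=W_kx^{(k)}$; for hidden layers $2\le k\le L-1$, $x^{(k)}_i=\max(0,z^{(k)}_i)$; and $F_w(x)=z^{(L)}$. A hidden node is active for $(x,w)$ if its output is positive. ReLU activation set: an assignment of "active"/"inactive" to every hidden node. The activation set realized by $(x_0,w_0)$ records which hidden nodes are active. Such a set induces a linear network in which inactive nodes output $0$ and active nodes output their pre-output $z^{(k)}_j$. Virtual polynomial of type $(i,k)$ for fixed input $x$: the output of node $(i,k)$ in the induced linear network, as a polynomial in the weight variables. $P$-active neural network: the sub-network consisting of the input nodes, the $P$-active hidden nodes, the output node $i$ under consideration, and all edges between these nodes. Irreducible: a real polynomial is irreducible if it is non-constant and is not a product of two non-constant polynomials. Real polynomials factor uniquely into irreducibles up to constants. *)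

theory Defs
  imports Complex_Main "HOL-Computational_Algebra.Factorial_Ring" "HOL-Library.Poly_Mapping" "HOL-Library.Product_Lexorder"
begin

text \<open>Weight variables: the triple (k,i,j) stands for the weight on the edge from node i of
  layer k to node j of layer k+1. Layers are numbered 1..L, nodes of layer k are 0..<d k.\<close>
type_synonym wvar = "nat \<times> nat \<times> nat"

type_synonym mpoly = "(wvar \<Rightarrow>\<^sub>0 nat) \<Rightarrow>\<^sub>0 real"

definition Const :: "real \<Rightarrow> mpoly" where
  "Const c = Poly_Mapping.single 0 c"

definition Var :: "wvar \<Rightarrow> mpoly" where
  "Var v = Poly_Mapping.single (Poly_Mapping.single v 1) 1"

fun layer_out :: "(nat \<Rightarrow> nat) \<Rightarrow> nat \<Rightarrow> (nat \<Rightarrow> nat \<Rightarrow> nat \<Rightarrow> real) \<Rightarrow> (nat \<Rightarrow> real)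
    \<Rightarrow> nat \<Rightarrow> nat \<Rightarrow> real" where
  "layer_out d L w x 0 j = 0"
| "layer_out d L w x (Suc 0) j = x j"
| "layer_out d L w x (Suc (Suc k)) j =
     (let z = (\<Sum>i<d (Suc k). w (Suc k) i j * layer_out d L w x (Suc k) i)
      in if Suc (Suc k) < L then max 0 z else z)"

definition activation_set :: "(nat \<Rightarrow> nat) \<Rightarrow> nat \<Rightarrow> (nat \<Rightarrow> nat \<Rightarrow> nat \<Rightarrow> real) \<Rightarrow> (nat \<Rightarrow> real)
    \<Rightarrow> (nat \<times> nat) set" where
  "activation_set d L w x =
     {(k, j). 2 \<le> k \<and> k < L \<and> j < d k \<and> layer_out d L w x k j > 0}"

text \<open>Linear network induced by the activation set P, started at layer a with node values
  init, run for m further layers; returns the polynomial output of node j of layer a+m.\<close>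
fun lin_net :: "(nat \<Rightarrow> nat) \<Rightarrow> nat \<Rightarrow> (nat \<times> nat) set \<Rightarrow> nat \<Rightarrow> (nat \<Rightarrow> mpoly)
    \<Rightarrow> nat \<Rightarrow> nat \<Rightarrow> mpoly" where
  "lin_net d L P a init 0 j = init j"
| "lin_net d L P a init (Suc m) j =
     (if 2 \<le> a + Suc m \<and> a + Suc m < L \<and> (a + Suc m, j) \<notin> P then 0
      else (\<Sum>i<d (a + m). Var (a + m, i, j) * lin_net d L P a init m i))"

definition virtual_poly :: "(nat \<Rightarrow> nat) \<Rightarrow> nat \<Rightarrow> (nat \<times> nat) set \<Rightarrow> (nat \<Rightarrow> real)
    \<Rightarrow> nat \<Rightarrow> nat \<Rightarrow> mpoly" where
  "virtual_poly d L P x i k = lin_net d L P 1 (\<lambda>j. Const (x j)) (k - 1) i"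

definition unique_layers :: "(nat \<Rightarrow> nat) \<Rightarrow> nat \<Rightarrow> (nat \<times> nat) set \<Rightarrow> nat set" where
  "unique_layers d L P = {k. 2 \<le> k \<and> k < L \<and> card {j. j < d k \<and> (k, j) \<in> P} = 1}"

definition unique_node :: "(nat \<Rightarrow> nat) \<Rightarrow> (nat \<times> nat) set \<Rightarrow> nat \<Rightarrow> nat" where
  "unique_node d P k = (THE j. j < d k \<and> (k, j) \<in> P)"

definition split_layers :: "(nat \<Rightarrow> nat) \<Rightarrow> nat \<Rightarrow> (nat \<times> nat) set \<Rightarrow> nat list" where
  "split_layers d L P = [1] @ sorted_list_of_set (unique_layers d L P) @ [L]"

definition block_poly :: "(nat \<Rightarrow> nat) \<Rightarrow> nat \<Rightarrow> (nat \<times> nat) set \<Rightarrow> (nat \<Rightarrow> real) \<Rightarrow> nat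
    \<Rightarrow> nat \<Rightarrow> mpoly" where
  "block_poly d L P x i s =
     (let ls = split_layers d L P; n = length ls - 1;
          a = ls ! (s - 1); b = ls ! s;
          init = (if s = 1 then (\<lambda>j. Const (x j))
                  else (\<lambda>j. if j = unique_node d P a then 1 else 0));
          out = (if s = n then i else unique_node d P b)
      in lin_net d L P a init (b - a) out)"

end

theory Submission
  imports Defs "HOL-Computational_Algebra.Polynomial"
begin


abbreviation lk :: "('a \<Rightarrow>\<^sub>0 'b::zero) \<Rightarrow> 'a \<Rightarrow> 'b" where "lk \<equiv> poly_mapping.lookup"
abbreviation ks :: "('a \<Rightarrow>\<^sub>0 'b::zero) \<Rightarrow> 'a set" where "ks \<equiv> Poly_Mapping.keys"

definition rhom :: "('a::comm_ring_1 \<Rightarrow> 'b::comm_ring_1) \<Rightarrow> bool" where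
  "rhom h \<longleftrightarrow> h 0 = 0 \<and> h 1 = 1 \<and> (\<forall>a b. h (a + b) = h a + h b) \<and> (\<forall>a b. h (a * b) = h a * h b)"

lemma rhom_sum: "rhom h \<Longrightarrow> h (sum g A) = sum (\<lambda>x. h (g x)) A"
  by (induct A rule: infinite_finite_induct) (auto simp: rhom_def)
lemma rhom_prod: "rhom h \<Longrightarrow> h (prod g A) = prod (\<lambda>x. h (g x)) A"
  by (induct A rule: infinite_finite_induct) (auto simp: rhom_def)
lemma rhom_power: "rhom h \<Longrightarrow> h (a ^ n) = h a ^ n"
  by (induct n) (auto simp: rhom_def)

definition mon :: "(wvar \<Rightarrow> 'r::comm_ring_1) \<Rightarrow> (wvar \<Rightarrow>\<^sub>0 nat) \<Rightarrow> 'r" where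
  "mon \<phi> m = (\<Prod>v\<in>ks m. \<phi> v ^ lk m v)"

definition E :: "(real \<Rightarrow> 'r::comm_ring_1) \<Rightarrow> (wvar \<Rightarrow> 'r) \<Rightarrow> mpoly \<Rightarrow> 'r" where
  "E \<psi> \<phi> f = (\<Sum>m\<in>ks f. \<psi> (lk f m) * mon \<phi> m)"

definition vars :: "mpoly \<Rightarrow> wvar set" where
  "vars f = (\<Union>m\<in>ks f. ks m)"

lemma mon_superset: "finite S \<Longrightarrow> ks m \<subseteq> S \<Longrightarrow> mon \<phi> m = (\<Prod>v\<in>S. \<phi> v ^ lk m v)"
  unfolding mon_def
  by (rule prod.mono_neutral_left) (auto simp: in_keys_iff)

lemma mon_add: "mon \<phi> (a + b) = mon \<phi> a * mon \<phi> b"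
proof -
  let ?S = "ks a \<union> ks b"
  have "mon \<phi> (a + b) = (\<Prod>v\<in>?S. \<phi> v ^ lk (a+b) v)"
    by (rule mon_superset) (auto dest: subsetD[OF keys_add])
  also have "\<dots> = (\<Prod>v\<in>?S. \<phi> v ^ lk a v) * (\<Prod>v\<in>?S. \<phi> v ^ lk b v)"
    by (simp add: lookup_add power_add prod.distrib)
  also have "\<dots> = mon \<phi> a * mon \<phi> b"
    by (simp add: mon_superset[of "ks a \<union> ks b"])
  finally show ?thesis .
qed

lemma mon_zero [simp]: "mon \<phi> 0 = 1"
  by (simp add: mon_def)

lemma mon_single1 [simp]: "mon \<phi> (Poly_Mapping.single v 1) = \<phi> v"
  by (simp add: mon_def lookup_single when_def)

lemma mon_single_Suc0 [simp]: "mon \<phi> (Poly_Mapping.single v (Suc 0)) = \<phi> v"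
  using mon_single1 by simp

lemma E_superset:
  assumes "\<psi> 0 = 0" "finite S" "ks f \<subseteq> S"
  shows "E \<psi> \<phi> f = (\<Sum>m\<in>S. \<psi> (lk f m) * mon \<phi> m)"
  unfolding E_def
  by (rule sum.mono_neutral_left) (use assms in \<open>auto simp: in_keys_iff\<close>)

lemma E_add:
  assumes "rhom \<psi>"
  shows "E \<psi> \<phi> (f + g) = E \<psi> \<phi> f + E \<psi> \<phi> g"
proof -
  let ?S = "ks f \<union> ks g"
  have z: "\<psi> 0 = 0" using assms by (simp add: rhom_def)
  have "E \<psi> \<phi> (f + g) = (\<Sum>m\<in>?S. \<psi> (lk (f+g) m) * mon \<phi> m)"
    by (rule E_superset) (use z in \<open>auto dest: subsetD[OF keys_add]\<close>)
  also have "\<dots> = (\<Sum>m\<in>?S. \<psi> (lk f m) * mon \<phi> m) + (\<Sum>m\<in>?S. \<psi> (lk g m) * mon \<phi> m)"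
    using assms by (simp add: lookup_add rhom_def distrib_right sum.distrib)
  also have "\<dots> = E \<psi> \<phi> f + E \<psi> \<phi> g"
    using E_superset[where \<psi>=\<psi> and S="ks f \<union> ks g" and f=f, OF z] E_superset[where \<psi>=\<psi> and S="ks f \<union> ks g" and f=g, OF z]
    by simp
  finally show ?thesis .
qed

lemma E_zero [simp]: "E \<psi> \<phi> 0 = 0"
  by (simp add: E_def)

lemma E_sum: "rhom \<psi> \<Longrightarrow> E \<psi> \<phi> (sum g A) = (\<Sum>x\<in>A. E \<psi> \<phi> (g x))"
  by (induct A rule: infinite_finite_induct) (auto simp: E_add)

lemma E_single: "rhom \<psi> \<Longrightarrow> E \<psi> \<phi> (Poly_Mapping.single m c) = \<psi> c * mon \<phi> m"
  by (auto simp: E_def rhom_def)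

lemma pm_expand: "(f :: 'a \<Rightarrow>\<^sub>0 'b::comm_monoid_add) = (\<Sum>m\<in>ks f. Poly_Mapping.single m (lk f m))"
proof (rule poly_mapping_eqI)
  fix k
  show "lk f k = lk (\<Sum>m\<in>ks f. Poly_Mapping.single m (lk f m)) k"
    by (cases "k \<in> ks f") (auto simp: lookup_sum lookup_single when_def in_keys_iff)
qed

lemma E_mult:
  assumes h: "rhom \<psi>"
  shows "E \<psi> \<phi> (f * g) = E \<psi> \<phi> f * E \<psi> \<phi> g"
proof -
  have "f * g = (\<Sum>a\<in>ks f. Poly_Mapping.single a (lk f a)) * (\<Sum>b\<in>ks g. Poly_Mapping.single b (lk g b))"
    by (subst (1) pm_expand[of f], subst (1) pm_expand[of g]) simp
  also have "\<dots> = (\<Sum>a\<in>ks f. \<Sum>b\<in>ks g. Poly_Mapping.single (a + b) (lk f a * lk g b))"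
    by (simp add: sum_product mult_single)
  finally have fg: "f * g = \<dots>" .
  have "E \<psi> \<phi> (f * g) = (\<Sum>a\<in>ks f. \<Sum>b\<in>ks g. \<psi> (lk f a) * mon \<phi> a * (\<psi> (lk g b) * mon \<phi> b))"
    unfolding fg using h by (simp add: E_sum E_single mon_add rhom_def mult_ac)
  also have "\<dots> = E \<psi> \<phi> f * E \<psi> \<phi> g"
    by (simp add: E_def sum_product)
  finally show ?thesis .
qed

lemma E_one: "rhom \<psi> \<Longrightarrow> E \<psi> \<phi> 1 = 1"
  using E_single[of \<psi> \<phi> 0 1] by (simp add: rhom_def one_poly_mapping.abs_eq single.abs_eq)

lemma E_Var: "rhom \<psi> \<Longrightarrow> E \<psi> \<phi> (Var v) = \<phi> v"
  by (simp add: Var_def E_single rhom_def)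

lemma E_Const: "rhom \<psi> \<Longrightarrow> E \<psi> \<phi> (Const c) = \<psi> c"
  by (simp add: Const_def E_single)

lemma E_hom:
  assumes "rhom h" "rhom \<psi>"
  shows "h (E \<psi> \<phi> f) = E (\<lambda>r. h (\<psi> r)) (\<lambda>v. h (\<phi> v)) f"
proof -
  have hm: "\<And>a b. h (a * b) = h a * h b" using assms(1) by (simp add: rhom_def)
  show ?thesis unfolding E_def mon_def
    by (simp add: rhom_sum[OF assms(1)] rhom_prod[OF assms(1)] rhom_power[OF assms(1)] hm)
qed

lemma E_cong:
  assumes "\<And>v. v \<in> vars f \<Longrightarrow> \<phi> v = \<phi>' v"
  shows "E \<psi> \<phi> f = E \<psi> \<phi>' f"
proof -
  have *: "\<And>m v. m \<in> ks f \<Longrightarrow> v \<in> ks m \<Longrightarrow> \<phi> v = \<phi>' v" using assms by (auto simp: vars_def)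
  show ?thesis unfolding E_def mon_def
    by (intro sum.cong refl arg_cong2[where f=times] prod.cong) (auto simp: *)
qed




lemma closure_sum: "P 0 \<Longrightarrow> (\<And>a b. P a \<Longrightarrow> P b \<Longrightarrow> P (a + b)) \<Longrightarrow> (\<And>x. x \<in> A \<Longrightarrow> P (g x)) \<Longrightarrow> P (sum g A)"
  by (induct A rule: infinite_finite_induct) auto
lemma closure_prod: "P 1 \<Longrightarrow> (\<And>a b. P a \<Longrightarrow> P b \<Longrightarrow> P (a * b)) \<Longrightarrow> (\<And>x. x \<in> A \<Longrightarrow> P (g x)) \<Longrightarrow> P (prod g A)"
  by (induct A rule: infinite_finite_induct) auto
lemma closure_power: "P 1 \<Longrightarrow> (\<And>a b. P a \<Longrightarrow> P b \<Longrightarrow> P (a * b)) \<Longrightarrow> P a \<Longrightarrow> P (a ^ n)"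
  by (induct n) auto

lemma E_closure:
  assumes "P 0" "P 1" "\<And>a b. P a \<Longrightarrow> P b \<Longrightarrow> P (a + b)" "\<And>a b. P a \<Longrightarrow> P b \<Longrightarrow> P (a * b)"
    "\<And>r. P (\<psi> r)" "\<And>v. v \<in> vars f \<Longrightarrow> P (\<phi> v)"
  shows "P (E \<psi> \<phi> f)"
  unfolding E_def mon_def
  by (intro closure_sum[where P=P] closure_prod[where P=P] closure_power[where P=P] assms(4,5,6))
     (auto simp: assms vars_def)

lemma finite_vars [simp]: "finite (vars f)"
  by (simp add: vars_def)

lemma vars_add: "vars (f + g) \<subseteq> vars f \<union> vars g"
proof
  fix y assume "y \<in> vars (f + g)"
  then obtain m where m: "m \<in> ks (f + g)" "y \<in> ks m" unfolding vars_def by blast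
  then have "m \<in> ks f \<union> ks g" using keys_add[of f g] by blast
  then show "y \<in> vars f \<union> vars g" using m(2) unfolding vars_def by blast
qed

lemma keys_add_nat: "ks (a + (b :: wvar \<Rightarrow>\<^sub>0 nat)) = ks a \<union> ks b"
  by (auto simp: in_keys_iff lookup_add)

lemma vars_mult: "vars (f * g) \<subseteq> vars f \<union> vars g"
proof
  fix y assume "y \<in> vars (f * g)"
  then obtain m where m: "m \<in> ks (f * g)" "y \<in> ks m" unfolding vars_def by blast
  then obtain a b where ab: "m = a + b" "a \<in> ks f" "b \<in> ks g" using keys_mult[of f g] by blast
  then have "y \<in> ks a \<or> y \<in> ks b" using m(2) by (simp add: keys_add_nat)
  then show "y \<in> vars f \<union> vars g" using ab unfolding vars_def by blast
qed

lemma vars_zero [simp]: "vars 0 = {}"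
  by (simp add: vars_def)
lemma vars_one [simp]: "vars 1 = {}"
  by (simp add: vars_def)
lemma vars_Const [simp]: "vars (Const c) = {}"
  by (simp add: vars_def Const_def)
lemma vars_Var [simp]: "vars (Var v) = {v}"
  by (simp add: vars_def Var_def)
lemma vars_uminus [simp]: "vars (- f) = vars f"
  by (simp add: vars_def)
lemma vars_sum: "vars (sum g A) \<subseteq> (\<Union>x\<in>A. vars (g x))"
  by (induct A rule: infinite_finite_induct) (auto dest: subsetD[OF vars_add])

lemma rhom_Const: "rhom Const"
  by (simp add: rhom_def Const_def single_add mult_single)
lemma rhom_id: "rhom id"
  by (simp add: rhom_def)
lemma rhom_id': "rhom (\<lambda>x. x)"
  by (simp add: rhom_def)
lemma rhom_pc: "rhom (\<lambda>r::mpoly. [:r:])"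
  by (simp add: rhom_def)
lemma rhom_pcC: "rhom (\<lambda>r. [:Const r:])"
  using rhom_Const by (simp add: rhom_def)
lemma rhom_poly: "rhom (\<lambda>p. poly p a)"
  by (simp add: rhom_def)
lemma rhom_E: "rhom \<psi> \<Longrightarrow> rhom (E \<psi> \<phi>)"
  by (simp add: rhom_def E_add E_mult E_one)

lemma single_pow: "(Poly_Mapping.single (Poly_Mapping.single v (Suc 0)) (1::real)) ^ n =
    Poly_Mapping.single (Poly_Mapping.single v n) 1"
  by (induct n) (auto simp: mult_single single_add[symmetric])

lemma prod_single: "(\<Prod>x\<in>A. Poly_Mapping.single (g x) (1::real)) = Poly_Mapping.single (\<Sum>x\<in>A. g x) 1"
  by (induct A rule: infinite_finite_induct) (auto simp: mult_single)

lemma mon_Var: "mon Var m = Poly_Mapping.single m 1"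
proof -
  have "mon Var m = (\<Prod>v\<in>ks m. Poly_Mapping.single (Poly_Mapping.single v (lk m v)) (1::real))"
    unfolding mon_def Var_def by (simp add: single_pow)
  also have "\<dots> = Poly_Mapping.single m 1"
    by (simp add: prod_single pm_expand[of m, symmetric])
  finally show ?thesis .
qed

lemma E_id: "E Const Var f = f"
proof -
  have "E Const Var f = (\<Sum>m\<in>ks f. Poly_Mapping.single m (lk f m))"
    unfolding E_def mon_Var by (simp add: Const_def mult_single)
  then show ?thesis by (simp add: pm_expand[of f, symmetric])
qed

lemma E_id_on: "(\<And>v. v \<in> vars f \<Longrightarrow> \<phi> v = Var v) \<Longrightarrow> E Const \<phi> f = f"
  using E_cong[of f \<phi> Var Const] E_id by simp

lemma E_Const_on:
  assumes "\<And>v. v \<in> vars f \<Longrightarrow> \<phi> v = Const (w v)"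
  shows "E Const \<phi> f = Const (E id w f)"
proof -
  have "E Const \<phi> f = E Const (\<lambda>v. Const (w v)) f" by (rule E_cong) (simp add: assms)
  also have "\<dots> = Const (E id w f)"
    using E_hom[OF rhom_Const rhom_id, of w f] by simp
  finally show ?thesis .
qed

lemma E_vars:
  assumes "\<And>v. v \<in> vars f \<Longrightarrow> vars (\<phi> v) \<subseteq> S"
  shows "vars (E Const \<phi> f) \<subseteq> S"
  by (rule E_closure[where P="\<lambda>p. vars p \<subseteq> S"])
     (use assms vars_add vars_mult in \<open>auto simp: dest: subsetD[OF vars_add] subsetD[OF vars_mult]\<close>)

definition Ey :: "wvar \<Rightarrow> mpoly \<Rightarrow> mpoly poly" where
  "Ey y f = E (\<lambda>r. [:Const r:]) (\<lambda>v. if v = y then [:0, 1:] else [:Var v:]) f"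

lemma Ey_add: "Ey y (f + g) = Ey y f + Ey y g"
  by (simp add: Ey_def E_add rhom_pcC)
lemma Ey_mult: "Ey y (f * g) = Ey y f * Ey y g"
  by (simp add: Ey_def E_mult rhom_pcC)
lemma Ey_sum: "Ey y (sum g A) = (\<Sum>x\<in>A. Ey y (g x))"
  by (simp add: Ey_def E_sum rhom_pcC)
lemma Ey_Var: "Ey y (Var v) = (if v = y then [:0, 1:] else [:Var v:])"
  by (simp add: Ey_def E_Var rhom_pcC)
lemma Ey_Const: "Ey y (Const c) = [:Const c:]"
  by (simp add: Ey_def E_Const rhom_pcC)
lemma Ey_zero [simp]: "Ey y 0 = 0"
  by (simp add: Ey_def)
lemma Ey_one [simp]: "Ey y 1 = 1"
  by (simp add: Ey_def E_one rhom_pcC)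

lemma Ey_free: "y \<notin> vars f \<Longrightarrow> Ey y f = [:f:]"
proof -
  assume y: "y \<notin> vars f"
  have "Ey y f = E (\<lambda>r. [:Const r:]) (\<lambda>v. [:Var v:]) f"
    unfolding Ey_def by (rule E_cong) (use y in auto)
  also have "\<dots> = [:E Const Var f:]"
    using E_hom[OF rhom_pc rhom_Const, of Var f] by simp
  finally show ?thesis by (simp add: E_id)
qed

lemma Ey_back: "poly (Ey y f) (Var y) = f"
proof -
  have e: "(\<lambda>v. poly (if v = y then [:0, 1:] else [:Var v:]) (Var y)) = Var" by auto
  have c: "(\<lambda>r. poly [:Const r:] (Var y)) = Const" by auto
  show ?thesis
    unfolding Ey_def using E_hom[OF rhom_poly[of "Var y"] rhom_pcC] by (simp only: e E_id c)
qed

lemma Ey_nz: "f \<noteq> 0 \<Longrightarrow> Ey y f \<noteq> 0"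
  using Ey_back[of y f] by auto

lemma mon_kill:
  "mon (\<lambda>v. if v = y then 0 else Var v) m = (if y \<in> ks m then 0 else Poly_Mapping.single m 1)"
proof (cases "y \<in> ks m")
  case True
  then show ?thesis unfolding mon_def
    by (auto intro!: prod_zero bexI[of _ y] simp: in_keys_iff)
next
  case False
  have "mon (\<lambda>v. if v = y then 0 else Var v) m = mon Var m"
    unfolding mon_def by (rule prod.cong) (use False in auto)
  then show ?thesis using False by (simp add: mon_Var)
qed

lemma lookup_kill:
  "lk (E Const (\<lambda>v. if v = y then 0 else Var v) f) m = (if y \<in> ks m then 0 else lk f m)"
proof -
  have "E Const (\<lambda>v. if v = y then 0 else Var v) f =
        (\<Sum>x\<in>ks f. Poly_Mapping.single x (if y \<in> ks x then 0 else lk f x))"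
    unfolding E_def mon_kill by (rule sum.cong) (auto simp: Const_def mult_single)
  then have "lk (E Const (\<lambda>v. if v = y then 0 else Var v) f) m =
     (\<Sum>x\<in>ks f. (if x = m then (if y \<in> ks x then 0 else lk f x) else 0))"
    by (simp add: lookup_sum lookup_single when_def eq_commute)
  also have "\<dots> = (if m \<in> ks f then (if y \<in> ks m then 0 else lk f m) else 0)"
    by (simp add: sum.delta')
  finally show ?thesis by (auto simp: in_keys_iff)
qed

lemma deg0_free:
  assumes "degree (Ey y f) = 0"
  shows "y \<notin> vars f"
proof
  assume y: "y \<in> vars f"
  obtain c where c: "Ey y f = [:c:]" using assms degree_eq_zeroE by blast
  have f: "f = c" using Ey_back[of y f] c by simp
  have e: "(\<lambda>v. poly (if v = y then [:0, 1:] else [:Var v:]) 0) = (\<lambda>v. if v = y then 0 else Var v)"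
    by auto
  have cc: "(\<lambda>r. poly [:Const r:] 0) = Const" by auto
  have "poly (Ey y f) 0 = E Const (\<lambda>v. if v = y then 0 else Var v) f"
    unfolding Ey_def using E_hom[OF rhom_poly[of 0] rhom_pcC] by (simp only: e cc)
  then have eq: "E Const (\<lambda>v. if v = y then 0 else Var v) f = f" using c f by simp
  from y obtain m where m: "m \<in> ks f" "y \<in> ks m" by (auto simp: vars_def)
  have "lk f m = 0" using lookup_kill[of y f m] m eq by simp
  with m show False by (simp add: in_keys_iff)
qed

lemma free_iff_deg0: "y \<notin> vars f \<longleftrightarrow> degree (Ey y f) = 0"
  by (metis deg0_free Ey_free degree_pCons_0)

lemma vars_dvd:
  assumes "F = D * H" "F \<noteq> 0" "y \<notin> vars F"
  shows "y \<notin> vars D"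
proof -
  have "degree (Ey y F) = degree (Ey y D) + degree (Ey y H)"
    using assms by (simp add: Ey_mult degree_mult_eq Ey_nz)
  then show ?thesis using assms(3) by (simp add: free_iff_deg0)
qed

lemma vars_dvd': "D dvd F \<Longrightarrow> F \<noteq> 0 \<Longrightarrow> y \<notin> vars F \<Longrightarrow> y \<notin> vars D"
  by (erule dvdE) (rule vars_dvd, assumption+)

lemma novars_Const: "vars f = {} \<Longrightarrow> f = Const (lk f 0)"
proof -
  assume v: "vars f = {}"
  have "\<And>m. m \<in> ks f \<Longrightarrow> m = 0" using v by (auto simp: vars_def)
  then have "ks f \<subseteq> {0}" by auto
  then have "f = (\<Sum>m\<in>{0}. Poly_Mapping.single m (lk f m))"
    by (subst pm_expand) (rule sum.mono_neutral_left, auto simp: in_keys_iff)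
  then show ?thesis by (simp add: Const_def)
qed

lemma unit_Const: "(D::mpoly) dvd 1 \<Longrightarrow> \<exists>c. c \<noteq> 0 \<and> D = Const c"
proof -
  assume u: "D dvd 1"
  have "vars D = {}" using vars_dvd'[OF u] by auto
  then have D: "D = Const (lk D 0)" by (rule novars_Const)
  have "D \<noteq> 0" using u by auto
  then show ?thesis using D by (metis Const_def single_zero)
qed

lemma Const_unit: "c \<noteq> 0 \<Longrightarrow> Const c dvd 1"
  by (rule dvdI[of _ _ "Const (1/c)"]) (simp add: Const_def mult_single)




lemma inj_Const: "inj Const"
  by (rule injI) (metis Const_def lookup_single_eq)

lemma E_id_Const [simp]: "E id w (Const r) = r"
  by (simp add: E_Const rhom_id)
lemma E_id_Var [simp]: "E id w (Var v) = w v"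
  by (simp add: E_Var rhom_id)

lemma E_compose:
  "E id w (E Const \<phi> f) = E id (\<lambda>v. E id w (\<phi> v)) f"
proof -
  have eq: "(\<lambda>r. E id w (Const r)) = id" by (simp add: fun_eq_iff)
  show ?thesis using E_hom[OF rhom_E[OF rhom_id] rhom_Const, of w \<phi> f] unfolding eq .
qed

lemma nonroot: "f \<noteq> 0 \<Longrightarrow> \<exists>w. E id w f \<noteq> 0"
proof (induct "card (vars f)" arbitrary: f rule: less_induct)
  case less
  show ?case
  proof (cases "vars f = {}")
    case True
    then have f: "f = Const (lk f 0)" by (rule novars_Const)
    then have "lk f 0 \<noteq> 0" using less.prems by (metis Const_def single_zero)
    then show ?thesis by (subst f) simp
  next
    case False
    then obtain y where y: "y \<in> vars f" by auto
    define p where "p = Ey y f"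
    have p0: "p \<noteq> 0" unfolding p_def using less.prems by (rule Ey_nz)
    have "\<exists>t. poly p (Const t) \<noteq> 0"
    proof (rule ccontr)
      assume "\<not> ?thesis"
      then have "range Const \<subseteq> {x. poly p x = 0}" by auto
      moreover have "finite {x. poly p x = 0}" using p0 by (rule poly_roots_finite)
      ultimately have "finite (range Const)" by (rule finite_subset)
      then have "finite (UNIV :: real set)" using finite_imageD inj_Const by blast
      then show False using infinite_UNIV_char_0 by blast
    qed
    then obtain t where t: "poly p (Const t) \<noteq> 0" by blast
    define \<phi> where "\<phi> = (\<lambda>v. if v = y then Const t else Var v)"
    have ft: "poly p (Const t) = E Const \<phi> f"
    proof -
      have e: "(\<lambda>v. poly (if v = y then [:0, 1:] else [:Var v:]) (Const t)) = \<phi>"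
        by (auto simp: \<phi>_def)
      have cc: "(\<lambda>r. poly [:Const r:] (Const t)) = Const" by auto
      show ?thesis unfolding p_def Ey_def
        using E_hom[OF rhom_poly[of "Const t"] rhom_pcC] by (simp only: e cc)
    qed
    have vs: "vars (E Const \<phi> f) \<subseteq> vars f - {y}"
      by (rule E_vars) (auto simp: \<phi>_def)
    then have "vars (E Const \<phi> f) \<subset> vars f" using y by blast
    then have "card (vars (E Const \<phi> f)) < card (vars f)"
      by (rule psubset_card_mono[OF finite_vars])
    moreover have "E Const \<phi> f \<noteq> 0" using t ft by simp
    ultimately obtain w where w: "E id w (E Const \<phi> f) \<noteq> 0"
      using less.hyps by blast
    then show ?thesis unfolding E_compose by blast
  qed
qed

definition Sb :: "wvar set \<Rightarrow> (wvar \<Rightarrow> real) \<Rightarrow> mpoly \<Rightarrow> mpoly" where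
  "Sb T w f = E Const (\<lambda>v. if v \<in> T then Const (w v) else Var v) f"

lemma Sb_mult: "Sb T w (f * g) = Sb T w f * Sb T w g"
  by (simp add: Sb_def E_mult rhom_Const)
lemma Sb_out: "vars f \<inter> T = {} \<Longrightarrow> Sb T w f = f"
  unfolding Sb_def by (rule E_id_on) auto
lemma Sb_in: "vars f \<subseteq> T \<Longrightarrow> Sb T w f = Const (E id w f)"
  unfolding Sb_def by (rule E_Const_on) auto
lemma Sb_vars: "vars (Sb T w f) \<subseteq> vars f - T"
  unfolding Sb_def by (rule E_vars) auto

lemma split_dvd:
  assumes u: "A * C = g * h" and irr: "irreducible g" and dis: "vars g \<inter> vars h = {}"
    and AZ: "vars A \<inter> Z = {}" and CZ: "vars C \<subseteq> Z" and nz: "A * C \<noteq> 0"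
  shows "(vars g \<subseteq> Z \<and> g dvd C) \<or> (vars g \<inter> Z = {} \<and> g dvd A)"
proof -
  have A0: "A \<noteq> 0" and C0: "C \<noteq> 0" and h0: "h \<noteq> 0" using nz u by auto
  have case1: "g dvd A" if gZ: "vars g \<inter> Z = {}"
  proof -
    obtain w where w: "E id w C \<noteq> 0" using nonroot[OF C0] by blast
    have "Sb Z w (A * C) = Sb Z w (g * h)" using u by simp
    then have "A * Const (E id w C) = g * Sb Z w h"
      by (simp add: Sb_mult Sb_out[OF AZ] Sb_in[OF CZ] Sb_out[OF gZ])
    then have "A = g * (Sb Z w h * Const (1 / E id w C))"
      using w by (metis (no_types, lifting) Const_def mult.assoc mult_single mult.right_neutral
          nonzero_eq_divide_eq single_one)
    then show ?thesis by simp
  qed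
  have case2: "g dvd C" if gZ: "vars g \<subseteq> Z"
  proof -
    obtain w where w: "E id w A \<noteq> 0" using nonroot[OF A0] by blast
    have AZ': "vars A \<subseteq> - Z" using AZ by auto
    have CZ': "vars C \<inter> - Z = {}" using CZ by auto
    have gZ': "vars g \<inter> - Z = {}" using gZ by auto
    have "Sb (- Z) w (A * C) = Sb (- Z) w (g * h)" using u by simp
    then have "Const (E id w A) * C = g * Sb (- Z) w h"
      by (simp add: Sb_mult Sb_out[OF CZ'] Sb_in[OF AZ'] Sb_out[OF gZ'])
    then have "C = g * (Sb (- Z) w h * Const (1 / E id w A))"
      using w by (metis (no_types, lifting) Const_def mult.assoc mult.commute mult_single mult.right_neutral
          nonzero_eq_divide_eq single_one)
    then show ?thesis by simp
  qed
  have nomix: False if z1: "z1 \<in> vars g \<inter> Z" and z2: "z2 \<in> vars g - Z" for z1 z2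
  proof -
    obtain w where w: "E id w h \<noteq> 0" using nonroot[OF h0] by blast
    let ?T = "- vars g"
    have gT: "vars g \<inter> ?T = {}" by auto
    have hT: "vars h \<subseteq> ?T" using dis by auto
    have "Sb ?T w (g * h) = Sb ?T w (A * C)" using u by simp
    then have e: "g * Const (E id w h) = Sb ?T w A * Sb ?T w C"
      by (simp add: Sb_mult Sb_out[OF gT] Sb_in[OF hT])
    have gq: "g = Sb ?T w A * (Sb ?T w C * Const (1 / E id w h))"
    proof -
      have "g = g * Const (E id w h) * Const (1 / E id w h)"
        using w by (simp add: Const_def mult.assoc mult_single)
      then show ?thesis using e by (simp add: mult.assoc)
    qed
    have vA: "vars (Sb ?T w A) \<subseteq> - Z" using Sb_vars[of ?T w A] AZ by auto
    have vC: "vars (Sb ?T w C * Const (1 / E id w h)) \<subseteq> Z"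
      using Sb_vars[of ?T w C] CZ vars_mult[of "Sb ?T w C" "Const (1 / E id w h)"] by auto
    from irreducibleD[OF irr gq] show False
    proof
      assume "Sb ?T w A dvd 1"
      then obtain c where "Sb ?T w A = Const c" using unit_Const by blast
      then have "vars g \<subseteq> Z" using gq vC vars_mult[of "Const c" "Sb ?T w C * Const (1 / E id w h)"] by auto
      then show False using z2 by auto
    next
      assume "Sb ?T w C * Const (1 / E id w h) dvd 1"
      then obtain c where "Sb ?T w C * Const (1 / E id w h) = Const c" using unit_Const by blast
      then have "vars g \<subseteq> - Z" using gq vA vars_mult[of "Sb ?T w A" "Const c"] by auto
      then show False using z1 by auto
    qed
  qed
  show ?thesis
  proof (cases "vars g \<inter> Z = {}")
    case True then show ?thesis using case1 by auto
  next
    case False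
    then have "vars g \<subseteq> Z" using nomix by blast
    then show ?thesis using case2 by auto
  qed
qed




lemma vars_prod_list: "vars (prod_list xs) \<subseteq> (\<Union>x\<in>set xs. vars x)"
proof (induct xs)
  case Nil then show ?case by simp
next
  case (Cons a xs)
  then show ?case using vars_mult[of a "prod_list xs"] by auto
qed

lemma dvd_prod_list_mem: "x \<in> set xs \<Longrightarrow> x dvd prod_list (xs :: 'a::comm_monoid_mult list)"
  by (induct xs) auto

lemma prod_list_pick:
  fixes xs :: "'a::comm_monoid_mult list"
  assumes "k < length xs"
  shows "prod_list xs = xs ! k * prod_list (take k xs @ drop (Suc k) xs)"
proof -
  have "xs = take k xs @ xs ! k # drop (Suc k) xs" using assms by (rule id_take_nth_drop)
  then have "prod_list xs = prod_list (take k xs @ xs ! k # drop (Suc k) xs)" by (rule arg_cong)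
  then show ?thesis by (simp add: mult_ac)
qed

lemma nth_in_rest:
  assumes "k1 < length xs" "k2 < length xs" "k1 \<noteq> k2"
  shows "xs ! k2 \<in> set (take k1 xs @ drop (Suc k1) xs)"
proof (cases "k2 < k1")
  case True
  then have "take k1 xs ! k2 = xs ! k2" by simp
  moreover have "k2 < length (take k1 xs)" using True assms by simp
  ultimately show ?thesis by (metis UnI1 nth_mem set_append)
next
  case False
  then have k: "Suc k1 \<le> k2" using assms by simp
  then have "drop (Suc k1) xs ! (k2 - Suc k1) = xs ! k2" using assms by simp
  moreover have "k2 - Suc k1 < length (drop (Suc k1) xs)" using k assms by simp
  ultimately show ?thesis by (metis UnI2 nth_mem set_append)
qed

lemma ml_disj:
  assumes ml: "\<forall>y. degree (Ey y u) \<le> 1" and u: "u = a * b" and u0: "u \<noteq> 0"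
  shows "vars a \<inter> vars b = {}"
proof (rule ccontr)
  assume "vars a \<inter> vars b \<noteq> {}"
  then obtain y where y: "y \<in> vars a" "y \<in> vars b" by blast
  have a0: "a \<noteq> 0" and b0: "b \<noteq> 0" using u u0 by auto
  have "degree (Ey y u) = degree (Ey y a) + degree (Ey y b)"
    using u a0 b0 by (simp add: Ey_mult degree_mult_eq Ey_nz)
  moreover have "degree (Ey y a) \<noteq> 0" using y(1) free_iff_deg0[of y a] by blast
  moreover have "degree (Ey y b) \<noteq> 0" using y(2) free_iff_deg0[of y b] by blast
  ultimately show False using ml[rule_format, of y] by linarith
qed

lemma irr_vars: "irreducible (B::mpoly) \<Longrightarrow> vars B \<noteq> {}"
proof
  assume irr: "irreducible B" and v: "vars B = {}"
  then have B: "B = Const (lk B 0)" by (simp add: novars_Const)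
  have "lk B 0 \<noteq> 0" using irr B by (metis Const_def irreducible_def single_zero)
  then have "B dvd 1" using B Const_unit by metis
  then show False using irr irreducible_not_unit by blast
qed

lemma irr_dvd_irr:
  assumes g: "irreducible (g::mpoly)" and B: "irreducible B" and d: "g dvd B"
  shows "\<exists>c. c \<noteq> 0 \<and> g = Const c * B"
proof -
  obtain k where k: "B = g * k" using d by blast
  have "\<not> g dvd 1" using g irreducible_not_unit by blast
  then have "k dvd 1" using irreducibleD[OF B k] by blast
  then obtain c where c: "c \<noteq> 0" "k = Const c" using unit_Const by blast
  have "Const (1 / c) * B = g" using k c by (simp add: Const_def mult_single mult.assoc[symmetric] mult.commute)
  then show ?thesis using c by (metis divide_eq_0_iff one_neq_zero)
qed

lemma vars_Const_mult: "c \<noteq> 0 \<Longrightarrow> vars (Const c * B) = vars B"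
proof
  show "vars (Const c * B) \<subseteq> vars B" using vars_mult[of "Const c" B] by simp
next
  assume c: "c \<noteq> 0"
  have e: "Const (1 / c) * (Const c * B) = B" using c by (simp add: Const_def mult_single mult.assoc[symmetric])
  have "vars (Const (1 / c) * (Const c * B)) \<subseteq> vars (Const c * B)"
    using vars_mult[of "Const (1/c)" "Const c * B"] by simp
  then show "vars B \<subseteq> vars (Const c * B)" by (simp only: e)
qed

definition pdisj :: "mpoly list \<Rightarrow> bool" where
  "pdisj Bs \<longleftrightarrow> (\<forall>s<length Bs. \<forall>t<length Bs. s \<noteq> t \<longrightarrow> vars (Bs ! s) \<inter> vars (Bs ! t) = {})"

lemma pdisj_Cons: "pdisj (B # Bs) \<Longrightarrow> pdisj Bs \<and> (\<forall>x\<in>set Bs. vars B \<inter> vars x = {})"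
proof -
  assume p: "pdisj (B # Bs)"
  have "pdisj Bs"
    unfolding pdisj_def
  proof (intro allI impI)
    fix s t assume "s < length Bs" "t < length Bs" "s \<noteq> t"
    then show "vars (Bs ! s) \<inter> vars (Bs ! t) = {}" using p[unfolded pdisj_def, rule_format, of "Suc s" "Suc t"] by simp
  qed
  moreover have "vars B \<inter> vars x = {}" if "x \<in> set Bs" for x
  proof -
    obtain t where t: "t < length Bs" "x = Bs ! t" using \<open>x \<in> set Bs\<close> by (metis in_set_conv_nth)
    then show ?thesis using p[unfolded pdisj_def, rule_format, of 0 "Suc t"] by simp
  qed
  ultimately show ?thesis by blast
qed

lemma assoc_block:
  assumes "\<forall>B\<in>set Bs. irreducible B" "pdisj Bs"
    "irreducible g" "g * h = prod_list Bs" "vars g \<inter> vars h = {}"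
  shows "\<exists>s<length Bs. vars g \<subseteq> vars (Bs ! s) \<and> g dvd Bs ! s"
  using assms
proof (induct Bs arbitrary: h)
  case Nil
  then have "g dvd 1" by (metis dvd_triv_left prod_list.Nil)
  then show ?case using Nil irreducible_not_unit by blast
next
  case (Cons B Bs)
  let ?A = "prod_list Bs"
  have irrB: "irreducible B" and irrBs: "\<forall>B\<in>set Bs. irreducible B" using Cons.prems by auto
  from pdisj_Cons[OF Cons.prems(2)] have pB: "pdisj Bs" and dB: "\<forall>x\<in>set Bs. vars B \<inter> vars x = {}"
    by auto
  have nz: "?A * B \<noteq> 0" using Cons.prems(1) by (auto simp: prod_list_zero_iff)
  have AZ: "vars ?A \<inter> vars B = {}" using vars_prod_list[of Bs] dB by blast
  have u: "?A * B = g * h" using Cons.prems(4) by (simp add: mult.commute)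
  from split_dvd[OF u Cons.prems(3) Cons.prems(5) AZ order_refl nz]
  show ?case
  proof
    assume "vars g \<subseteq> vars B \<and> g dvd B"
    then show ?thesis by force
  next
    assume a: "vars g \<inter> vars B = {} \<and> g dvd ?A"
    then obtain h' where h': "?A = g * h'" by blast
    have g0: "g \<noteq> 0" using Cons.prems(3) by auto
    have "g * h = g * (B * h')" using Cons.prems(4) h' by (simp add: mult_ac)
    then have hh: "h = h' * B" using g0 by (simp add: mult.commute)
    have h0: "h \<noteq> 0" using nz u by auto
    have "vars h' \<subseteq> vars h"
    proof
      fix y assume y: "y \<in> vars h'"
      show "y \<in> vars h" using vars_dvd[OF hh h0, of y] y by blast
    qed
    then have "vars g \<inter> vars h' = {}" using Cons.prems(5) by blast
    from Cons.hyps[OF irrBs pB Cons.prems(3) h'[symmetric] this]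
    obtain s where "s < length Bs" "vars g \<subseteq> vars (Bs ! s) \<and> g dvd Bs ! s" by blast
    then show ?thesis by (intro exI[of _ "Suc s"]) simp
  qed
qed

lemma uniq_fact:
  assumes irrB: "\<forall>B\<in>set Bs. irreducible B" and pd: "pdisj Bs"
    and ml: "\<forall>y. degree (Ey y (prod_list Bs)) \<le> 1"
    and irrg: "\<forall>g\<in>set gs. irreducible g" and eq: "prod_list gs = prod_list Bs"
  shows "length gs = length Bs \<and> (\<exists>p. bij_betw p {..<length gs} {..<length gs} \<and>
            (\<forall>s<length gs. \<exists>c. c \<noteq> 0 \<and> gs ! p s = Const c * Bs ! s))"
proof -
  let ?u = "prod_list Bs"
  let ?m = "length gs" and ?n = "length Bs"
  let ?h = "\<lambda>k. prod_list (take k gs @ drop (Suc k) gs)"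
  have u0: "?u \<noteq> 0" using irrB by (auto simp: prod_list_zero_iff)
  have gk: "gs ! k * ?h k = ?u" if "k < ?m" for k
    using prod_list_pick[OF that] eq by simp
  have dk: "vars (gs ! k) \<inter> vars (?h k) = {}" if "k < ?m" for k
    using ml_disj[OF ml gk[OF that, symmetric] u0] .
  have irrk: "irreducible (gs ! k)" if "k < ?m" for k using irrg that by simp
  have ex: "\<exists>s<?n. vars (gs ! k) \<subseteq> vars (Bs ! s) \<and> gs ! k dvd Bs ! s" if "k < ?m" for k
    by (rule assoc_block[OF irrB pd irrk[OF that] gk[OF that] dk[OF that]])
  define \<sigma> where "\<sigma> k = (SOME s. s < ?n \<and> vars (gs ! k) \<subseteq> vars (Bs ! s) \<and> gs ! k dvd Bs ! s)" for k
  have \<sigma>: "\<sigma> k < ?n \<and> vars (gs ! k) \<subseteq> vars (Bs ! \<sigma> k) \<and> gs ! k dvd Bs ! \<sigma> k" if "k < ?m" for k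
    unfolding \<sigma>_def by (rule someI_ex) (use ex[OF that] in blast)
  have assoc: "\<exists>c. c \<noteq> 0 \<and> gs ! k = Const c * Bs ! \<sigma> k" if "k < ?m" for k
    using irr_dvd_irr[OF irrk[OF that], of "Bs ! \<sigma> k"] \<sigma>[OF that] irrB by simp
  have varsk: "vars (gs ! k) = vars (Bs ! \<sigma> k)" if "k < ?m" for k
    using assoc[OF that] vars_Const_mult by auto
  have inj: "inj_on \<sigma> {..<?m}"
  proof (rule inj_onI, rule ccontr)
    fix k1 k2 assume k: "k1 \<in> {..<?m}" "k2 \<in> {..<?m}" "\<sigma> k1 = \<sigma> k2" "k1 \<noteq> k2"
    have mem: "gs ! k2 \<in> set (take k1 gs @ drop (Suc k1) gs)" using k by (intro nth_in_rest) auto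
    have h0: "?h k1 \<noteq> 0" using gk[of k1] k u0 by auto
    have "vars (gs ! k2) \<subseteq> vars (?h k1)"
    proof
      fix y assume "y \<in> vars (gs ! k2)"
      then show "y \<in> vars (?h k1)" using vars_dvd'[OF dvd_prod_list_mem[OF mem] h0] by blast
    qed
    moreover have "vars (gs ! k2) = vars (gs ! k1)" using varsk k by auto
    moreover have "vars (gs ! k1) \<noteq> {}" using irr_vars irrk k by auto
    ultimately show False using dk[of k1] k by auto
  qed
  have surj: "\<sigma> ` {..<?m} = {..<?n}"
  proof
    show "\<sigma> ` {..<?m} \<subseteq> {..<?n}" using \<sigma> by auto
  next
    show "{..<?n} \<subseteq> \<sigma> ` {..<?m}"
    proof
      fix s assume s: "s \<in> {..<?n}"
      have irrs: "irreducible (Bs ! s)" using irrB s by simp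
      obtain y where y: "y \<in> vars (Bs ! s)" using irr_vars[OF irrs] by blast
      have "Bs ! s dvd ?u" using s by (intro dvd_prod_list_mem) simp
      then have "y \<in> vars ?u" using vars_dvd'[of "Bs ! s" ?u y] y u0 by blast
      then have "y \<in> vars (prod_list gs)" using eq by simp
      then obtain g where g: "g \<in> set gs" "y \<in> vars g" using vars_prod_list[of gs] by blast
      then obtain k where k: "k < ?m" "g = gs ! k" by (metis in_set_conv_nth)
      have "y \<in> vars (Bs ! \<sigma> k)" using varsk[OF k(1)] g k by simp
      then have "\<sigma> k = s"
        using pd[unfolded pdisj_def, rule_format, of "\<sigma> k" s] \<sigma>[OF k(1)] s y by auto
      then show "s \<in> \<sigma> ` {..<?m}" using k by auto
    qed
  qed
  have bij: "bij_betw \<sigma> {..<?m} {..<?n}" using inj surj by (simp add: bij_betw_def)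
  then have mn: "?m = ?n" using bij_betw_same_card by fastforce
  define p where "p = the_inv_into {..<?m} \<sigma>"
  have bp: "bij_betw p {..<?n} {..<?m}" unfolding p_def by (rule bij_betw_the_inv_into[OF bij])
  have sp: "\<sigma> (p s) = s" if "s < ?n" for s
    unfolding p_def using f_the_inv_into_f_bij_betw[OF bij] that by simp
  have "\<forall>s<?m. \<exists>c. c \<noteq> 0 \<and> gs ! p s = Const c * Bs ! s"
  proof (intro allI impI)
    fix s assume s: "s < ?m"
    have ps: "p s < ?m" using bp s mn by (auto simp: bij_betw_def)
    show "\<exists>c. c \<noteq> 0 \<and> gs ! p s = Const c * Bs ! s" using assoc[OF ps] sp[of s] s mn by simp
  qed
  then show ?thesis using mn bp by auto
qed




lemma ml_from_blocks:
  assumes pd: "pdisj Bs" and dg: "\<forall>B\<in>set Bs. degree (Ey y B) \<le> 1"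
  shows "degree (Ey y (prod_list Bs)) \<le> 1"
proof (cases "\<exists>s<length Bs. y \<in> vars (Bs ! s)")
  case False
  have "y \<notin> vars (prod_list Bs)"
  proof
    assume "y \<in> vars (prod_list Bs)"
    then obtain B where "B \<in> set Bs" "y \<in> vars B" using vars_prod_list[of Bs] by blast
    then show False using False by (metis in_set_conv_nth)
  qed
  then show ?thesis by (simp add: free_iff_deg0)
next
  case True
  then obtain s where s: "s < length Bs" "y \<in> vars (Bs ! s)" by blast
  let ?r = "prod_list (take s Bs @ drop (Suc s) Bs)"
  have "y \<notin> vars ?r"
  proof
    assume "y \<in> vars ?r"
    then obtain B where B: "B \<in> set (take s Bs @ drop (Suc s) Bs)" "y \<in> vars B"
      using vars_prod_list by blast
    then obtain t where t: "t < length Bs" "t \<noteq> s" "B = Bs ! t"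
    proof -
      assume r: "\<And>t. t < length Bs \<Longrightarrow> t \<noteq> s \<Longrightarrow> B = Bs ! t \<Longrightarrow> thesis"
      from B(1) have "B \<in> set (take s Bs) \<or> B \<in> set (drop (Suc s) Bs)" by simp
      then show thesis
      proof
        assume "B \<in> set (take s Bs)"
        then obtain t where "t < length (take s Bs)" "B = take s Bs ! t" by (metis in_set_conv_nth)
        then show thesis using r[of t] s by simp
      next
        assume "B \<in> set (drop (Suc s) Bs)"
        then obtain t where "t < length (drop (Suc s) Bs)" "B = drop (Suc s) Bs ! t" by (metis in_set_conv_nth)
        then show thesis using r[of "Suc s + t"] s by simp
      qed
    qed
    then show False using pd[unfolded pdisj_def, rule_format, of s t] s B by auto
  qed
  then have "degree (Ey y ?r) = 0" by (simp add: free_iff_deg0)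
  moreover have "degree (Ey y (prod_list Bs)) \<le> degree (Ey y (Bs ! s)) + degree (Ey y ?r)"
    using prod_list_pick[OF s(1)] by (metis Ey_mult degree_mult_le)
  moreover have "degree (Ey y (Bs ! s)) \<le> 1" using dg s by simp
  ultimately show ?thesis by linarith
qed

lemma vars_LN:
  assumes "\<forall>j. vars (init j) = {}"
  shows "vars (lin_net d L P a init m j) \<subseteq>
     {v. a \<le> fst v \<and> fst v < a + m \<and> (Suc (fst v) = a + m \<longrightarrow> snd (snd v) = j)}"
proof (induct m arbitrary: j)
  case 0 then show ?case using assms by simp
next
  case (Suc m)
  have "vars (\<Sum>i<d (a + m). Var (a + m, i, j) * lin_net d L P a init m i) \<subseteq>
     (\<Union>i<d (a + m). vars (Var (a + m, i, j) * lin_net d L P a init m i))"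
    by (rule vars_sum)
  also have "\<dots> \<subseteq> {v. a \<le> fst v \<and> fst v < a + Suc m \<and> (Suc (fst v) = a + Suc m \<longrightarrow> snd (snd v) = j)}"
  proof (rule UN_least)
    fix i
    show "vars (Var (a + m, i, j) * lin_net d L P a init m i) \<subseteq>
       {v. a \<le> fst v \<and> fst v < a + Suc m \<and> (Suc (fst v) = a + Suc m \<longrightarrow> snd (snd v) = j)}"
      using vars_mult[of "Var (a + m, i, j)" "lin_net d L P a init m i"] Suc[of i] by fastforce
  qed
  finally show ?case by simp
qed

lemma deg_LN:
  assumes "\<forall>j. vars (init j) = {}"
  shows "degree (Ey y (lin_net d L P a init m j)) \<le> 1"
proof (induct m arbitrary: j)
  case 0 then show ?case using assms by (simp add: Ey_free)
next
  case (Suc m)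
  have "degree (Ey y (Var (a + m, i, j) * lin_net d L P a init m i)) \<le> 1" for i
  proof (cases "y = (a + m, i, j)")
    case True
    then have "y \<notin> vars (lin_net d L P a init m i)" using vars_LN[OF assms, of d L P a m i] by auto
    then show ?thesis using True by (simp add: Ey_mult Ey_Var Ey_free)
  next
    case False
    then show ?thesis using Suc[of i] by (simp add: Ey_mult Ey_Var)
  qed
  then have "degree (Ey y (\<Sum>i<d (a + m). Var (a + m, i, j) * lin_net d L P a init m i)) \<le> 1"
    unfolding Ey_sum by (intro degree_sum_le) auto
  then show ?case by simp
qed

lemma LN_comp:
  assumes act: "\<forall>j. (a + m1, j) \<in> P \<longleftrightarrow> j = c" and h: "2 \<le> a + m1" "a + m1 < L" and m1: "0 < m1"
  shows "lin_net d L P a init (m1 + m2) j =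
         lin_net d L P a init m1 c * lin_net d L P (a + m1) (\<lambda>j. if j = c then 1 else 0) m2 j"
proof (induct m2 arbitrary: j)
  case 0
  obtain m' where m': "m1 = Suc m'" using m1 by (cases m1) auto
  show ?case
  proof (cases "j = c")
    case False
    then have "(a + m1, j) \<notin> P" using act by simp
    then show ?thesis using h False by (simp add: m')
  qed simp
next
  case (Suc m2)
  let ?M = "lin_net d L P a init m1 c"
  let ?N = "lin_net d L P (a + m1) (\<lambda>j. if j = c then 1 else 0)"
  have "lin_net d L P a init (m1 + Suc m2) j = lin_net d L P a init (Suc (m1 + m2)) j" by simp
  also have "\<dots> = (if 2 \<le> a + Suc (m1 + m2) \<and> a + Suc (m1 + m2) < L \<and> (a + Suc (m1 + m2), j) \<notin> P then 0
      else (\<Sum>i<d (a + (m1 + m2)). Var (a + (m1 + m2), i, j) * lin_net d L P a init (m1 + m2) i))"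
    by (rule lin_net.simps(2))
  also have "\<dots> = (if 2 \<le> a + m1 + Suc m2 \<and> a + m1 + Suc m2 < L \<and> (a + m1 + Suc m2, j) \<notin> P then 0
      else (\<Sum>i<d (a + m1 + m2). Var (a + m1 + m2, i, j) * (?M * ?N m2 i)))"
    by (simp only: Suc add.assoc add_Suc_right)
  also have "\<dots> = ?M * ?N (Suc m2) j"
    by (simp add: sum_distrib_left mult_ac)
  finally show ?case .
qed

lemma LN_zero_prop:
  assumes "\<forall>j<d (a + m). lin_net d L P a init m j = 0"
  shows "lin_net d L P a init (Suc (m + r)) j = 0"
proof (induct r arbitrary: j)
  case 0 then show ?case using assms by simp
next
  case (Suc r)
  show ?case unfolding lin_net.simps(2)[of d L P a init "m + Suc r" j] using Suc by simp
qed

lemma coeff_extract: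
  assumes i0: "i0 < n" and fr: "\<forall>i<n. (k, i0, j) \<notin> vars (q i)"
  shows "coeff (Ey (k, i0, j) (\<Sum>i<n. Var (k, i, j) * q i)) 1 = q i0"
proof -
  have "coeff (Ey (k, i0, j) (\<Sum>i<n. Var (k, i, j) * q i)) 1 =
        (\<Sum>i<n. coeff (Ey (k, i0, j) (Var (k, i, j)) * [:q i:]) 1)"
    using fr by (simp add: Ey_sum Ey_mult Ey_free coeff_sum)
  also have "\<dots> = (\<Sum>i<n. if i = i0 then q i else 0)"
    by (rule sum.cong) (auto simp: Ey_Var)
  also have "\<dots> = q i0" using i0 by simp
  finally show ?thesis .
qed

lemma coeff1_mult_free:
  assumes "y \<notin> vars G"
  shows "coeff (Ey y (F * G)) 1 = coeff (Ey y F) 1 * G"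
  using assms by (simp add: Ey_mult Ey_free)




lemma E_idl_Const [simp]: "E (\<lambda>a. a) w (Const r) = r"
  by (simp add: E_Const rhom_id')
lemma E_idl_Var [simp]: "E (\<lambda>a. a) w (Var v) = w v"
  by (simp add: E_Var rhom_id')

lemma eval_LN:
  assumes P: "P = activation_set d L w0 x0" and j: "j < d (Suc m)"
  shows "E (\<lambda>a. a) (\<lambda>(k, i, j). w0 k i j) (lin_net d L P 1 (\<lambda>j. Const (x0 j)) m j) = layer_out d L w0 x0 (Suc m) j"
  using j
proof (induct m arbitrary: j)
  case 0 then show ?case by simp
next
  case (Suc m)
  let ?W = "\<lambda>(k, i, j). w0 k i j"
  let ?z = "\<Sum>i<d (Suc m). w0 (Suc m) i j * layer_out d L w0 x0 (Suc m) i"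
  have "E (\<lambda>a. a) ?W (\<Sum>i<d (Suc m). Var (Suc m, i, j) * lin_net d L P 1 (\<lambda>j. Const (x0 j)) m i) =
     (\<Sum>i<d (Suc m). w0 (Suc m) i j * E (\<lambda>a. a) ?W (lin_net d L P 1 (\<lambda>j. Const (x0 j)) m i))"
    by (simp add: E_sum E_mult rhom_id')
  also have "\<dots> = ?z" using Suc.hyps by (intro sum.cong) auto
  finally have ev: "E (\<lambda>a. a) ?W (\<Sum>i<d (Suc m). Var (Suc m, i, j) * lin_net d L P 1 (\<lambda>j. Const (x0 j)) m i) = ?z" .
  have lo: "layer_out d L w0 x0 (Suc (Suc m)) j = (if Suc (Suc m) < L then max 0 ?z else ?z)"
    by (simp add: Let_def)
  show ?case
  proof (cases "Suc (Suc m) < L")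
    case True
    show ?thesis
    proof (cases "(Suc (Suc m), j) \<in> P")
      case True
      then have "layer_out d L w0 x0 (Suc (Suc m)) j > 0" using P by (simp add: activation_set_def del: layer_out.simps)
      then have "?z > 0" using lo \<open>Suc (Suc m) < L\<close> by (simp add: max_def split: if_splits)
      then show ?thesis using lo ev \<open>Suc (Suc m) < L\<close> True by simp
    next
      case False
      then have "\<not> layer_out d L w0 x0 (Suc (Suc m)) j > 0" using P Suc.prems \<open>Suc (Suc m) < L\<close>
        by (simp add: activation_set_def del: layer_out.simps)
      then have "layer_out d L w0 x0 (Suc (Suc m)) j = 0" using lo \<open>Suc (Suc m) < L\<close> by simp
      then show ?thesis using \<open>Suc (Suc m) < L\<close> False by simp
    qed
  next
    case False
    then show ?thesis using lo ev by simp
  qed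
qed

locale net =
  fixes d :: "nat \<Rightarrow> nat" and L :: nat and x0 :: "nat \<Rightarrow> real"
    and w0 :: "nat \<Rightarrow> nat \<Rightarrow> nat \<Rightarrow> real" and i :: nat and P :: "(nat \<times> nat) set"
  assumes L2: "2 \<le> L" and iL: "i < d L" and P: "P = activation_set d L w0 x0"
    and u0: "virtual_poly d L P x0 i L \<noteq> 0"
begin

abbreviation "U \<equiv> unique_layers d L P"
abbreviation "ls \<equiv> split_layers d L P"
abbreviation "n \<equiv> card U + 1"
abbreviation "X \<equiv> (\<lambda>j. Const (x0 j))"
abbreviation "LN \<equiv> lin_net d L P"

lemma P_lt: "(k, j) \<in> P \<Longrightarrow> j < d k \<and> 2 \<le> k \<and> k < L"
  using P by (simp add: activation_set_def)

lemma U_sub: "U \<subseteq> {2..<L}"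
  by (auto simp: unique_layers_def)

lemma finite_U: "finite U"
  using U_sub finite_subset by blast

lemma U_node:
  assumes k: "k \<in> U"
  shows "2 \<le> k \<and> k < L \<and> unique_node d P k < d k \<and> (\<forall>j. (k, j) \<in> P \<longleftrightarrow> j = unique_node d P k)"
proof -
  have c1: "card {j. j < d k \<and> (k, j) \<in> P} = 1" and kk: "2 \<le> k" "k < L"
    using k by (auto simp: unique_layers_def)
  from c1 obtain c where c: "{j. j < d k \<and> (k, j) \<in> P} = {c}" by (rule card_1_singletonE)
  have un: "unique_node d P k = c" unfolding unique_node_def using c by auto
  have "(k, j) \<in> P \<longleftrightarrow> j = c" for j using c P_lt[of k j] by blast
  then show ?thesis using un c kk by auto
qed

lemma ls_def': "ls = 1 # sorted_list_of_set U @ [L]"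
  by (simp add: split_layers_def)

lemma ls_len: "length ls = n + 1"
  using finite_U by (simp add: ls_def')

lemma ls0: "ls ! 0 = 1"
  by (simp add: ls_def')

lemma lsn: "ls ! n = L"
  using finite_U by (simp add: ls_def' nth_append)

lemma ls_mid: "0 < t \<Longrightarrow> t < n \<Longrightarrow> ls ! t \<in> U"
proof -
  assume t: "0 < t" "t < n"
  then obtain r where r: "t = Suc r" by (cases t) auto
  have "r < length (sorted_list_of_set U)" using t r finite_U by simp
  then have "ls ! t = sorted_list_of_set U ! r" using r by (simp add: ls_def' nth_append)
  then show ?thesis using \<open>r < _\<close> finite_U by (metis nth_mem set_sorted_list_of_set)
qed

lemma ls_sorted: "sorted_wrt (<) ls"
proof -
  have "\<forall>x\<in>set (sorted_list_of_set U). 1 < x \<and> x < L" using finite_U U_sub by auto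
  then show ?thesis using finite_U L2 strict_sorted_list_of_set[of U]
    by (auto simp: ls_def' sorted_wrt_append)
qed

lemma ls_mono: "t < t' \<Longrightarrow> t' \<le> n \<Longrightarrow> ls ! t < ls ! t'"
  using sorted_wrt_nth_less[OF ls_sorted] ls_len by simp

lemma ls_mono_iff: "t \<le> n \<Longrightarrow> t' \<le> n \<Longrightarrow> ls ! t < ls ! t' \<longleftrightarrow> t < t'"
  by (metis ls_mono linorder_neqE_nat order_less_asym order_less_irrefl)

lemma ls_gap:
  assumes t: "t < n" and k: "ls ! t < k" "k < ls ! Suc t"
  shows "k \<notin> U"
proof
  assume kU: "k \<in> U"
  then obtain r where r: "r < length (sorted_list_of_set U)" "sorted_list_of_set U ! r = k"
    using finite_U by (metis in_set_conv_nth set_sorted_list_of_set)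
  have rr: "Suc r < n" using r finite_U by simp
  have "ls ! Suc r = k" using r by (simp add: ls_def' nth_append)
  then have "t < Suc r" "Suc r < Suc t" using k ls_mono_iff t rr by (metis Suc_leI less_imp_le_nat)+
  then show False by simp
qed

lemma ls_range: "t \<le> n \<Longrightarrow> 1 \<le> ls ! t \<and> ls ! t \<le> L"
proof -
  assume t: "t \<le> n"
  have "1 \<le> ls ! t"
  proof (cases "t = 0")
    case False then show ?thesis using ls_mono[of 0 t] t ls0 by simp
  qed (simp add: ls0)
  moreover have "ls ! t \<le> L"
  proof (cases "t = n")
    case False then show ?thesis using ls_mono[of t n] t lsn by simp
  qed (insert lsn, simp)
  ultimately show ?thesis by simp
qed

lemma virtual_eval:
  assumes "(k, j) \<in> P"
  shows "LN 1 X (k - 1) j \<noteq> 0"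
proof
  assume z: "LN 1 X (k - 1) j = 0"
  have kj: "j < d k" "2 \<le> k" "k < L" using P_lt[OF assms] by auto
  have "E (\<lambda>a. a) (\<lambda>(k, i, j). w0 k i j) (LN 1 X (k - 1) j) = layer_out d L w0 x0 k j"
    using eval_LN[OF P, of j "k - 1"] kj by simp
  moreover have "layer_out d L w0 x0 k j > 0" using assms P by (simp add: activation_set_def del: layer_out.simps)
  ultimately show False using z by simp
qed

end




lemma deg_sum_Var:
  assumes fr: "\<forall>i<m. y \<notin> vars (q i)"
  shows "degree (Ey y (\<Sum>i<m. Var (k, i, ot) * q i)) \<le> 1"
  unfolding Ey_sum
proof (rule degree_sum_le)
  fix i assume "i \<in> {..<m}"
  then have "Ey y (q i) = [:q i:]" using fr by (simp add: Ey_free)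
  then show "degree (Ey y (Var (k, i, ot) * q i)) \<le> 1"
    by (simp add: Ey_mult Ey_Var)
qed simp

lemma top_irr:
  fixes q :: "nat \<Rightarrow> mpoly"
  assumes B: "B = (\<Sum>i<m. Var (k, i, ot) * q i)" and B0: "B \<noteq> 0"
    and fr: "\<forall>i<m. \<forall>i'<m. (k, i', ot) \<notin> vars (q i)"
    and cd: "\<forall>D. (\<forall>i<m. D dvd q i) \<longrightarrow> D dvd 1"
  shows "irreducible B"
proof -
  define I where "I = {i. i < m \<and> q i \<noteq> 0}"
  have "I \<noteq> {}"
  proof
    assume "I = {}"
    then have "\<forall>i<m. q i = 0" by (auto simp: I_def)
    then have "B = 0" using B by simp
    then show False using B0 by simp
  qed
  then obtain i0 where i0: "i0 \<in> I" by blast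
  have ext: "coeff (Ey (k, i, ot) B) 1 = q i" if "i < m" for i
    using coeff_extract[of i m k ot q] that fr B by simp
  have inB: "(k, i, ot) \<in> vars B" if "i \<in> I" for i
  proof (rule ccontr)
    assume "(k, i, ot) \<notin> vars B"
    then have "Ey (k, i, ot) B = [:B:]" by (rule Ey_free)
    then have "coeff (Ey (k, i, ot) B) 1 = 0" by simp
    then show False using ext[of i] that by (simp add: I_def)
  qed
  have dg: "degree (Ey (k, i, ot) B) \<le> 1" if "i < m" for i
    unfolding B by (rule deg_sum_Var) (use fr that in auto)
  have side: "F dvd 1" if FG: "B = F * G" and nf: "(k, j0, ot) \<notin> vars F" and j0: "j0 \<in> I" for F G j0
  proof -
    have allI': "(k, j, ot) \<notin> vars F" if j: "j \<in> I" for j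
    proof (rule notI)
      assume jF: "(k, j, ot) \<in> vars F"
      have "q j0 = coeff (Ey (k, j0, ot) (G * F)) 1" using ext[of j0] j0 FG by (simp add: I_def mult.commute)
      also have "\<dots> = coeff (Ey (k, j0, ot) G) 1 * F" using nf by (rule coeff1_mult_free)
      finally have "q j0 = coeff (Ey (k, j0, ot) G) 1 * F" .
      moreover have "q j0 \<noteq> 0" "(k, j, ot) \<notin> vars (q j0)" using j0 j fr by (auto simp: I_def)
      ultimately have "(k, j, ot) \<notin> vars F" using vars_dvd[of "q j0" F "coeff (Ey (k, j0, ot) G) 1"]
        by (simp add: mult.commute)
      then show False using jF by simp
    qed
    have "\<forall>i<m. F dvd q i"
    proof (intro allI impI)
      fix i assume i: "i < m"
      show "F dvd q i"
      proof (cases "i \<in> I")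
        case True
        have "q i = coeff (Ey (k, i, ot) (G * F)) 1" using ext[OF i] FG by (simp add: mult.commute)
        also have "\<dots> = coeff (Ey (k, i, ot) G) 1 * F" using allI'[OF True] by (rule coeff1_mult_free)
        finally show ?thesis by simp
      next
        case False then show ?thesis using i by (simp add: I_def)
      qed
    qed
    then show ?thesis using cd by blast
  qed
  show ?thesis
  proof (rule irreducibleI)
    show "B \<noteq> 0" by (rule B0)
    show "\<not> B dvd 1"
    proof
      assume "B dvd 1"
      then have "vars B = {}" using vars_dvd'[of B 1] by auto
      then show False using inB[OF i0] by simp
    qed
    fix F G assume FG: "B = F * G"
    show "F dvd 1 \<or> G dvd 1"
    proof (cases "(k, i0, ot) \<in> vars F")
      case False then show ?thesis using side[OF FG False i0] by blast
    next
      case True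
      have "(k, i0, ot) \<notin> vars G"
      proof (rule notI)
        assume "(k, i0, ot) \<in> vars G"
        have "B \<noteq> 0" by (rule B0)
        then have F0: "F \<noteq> 0" and G0: "G \<noteq> 0" using FG by auto
        have "degree (Ey (k, i0, ot) B) = degree (Ey (k, i0, ot) F) + degree (Ey (k, i0, ot) G)"
          using FG F0 G0 by (simp add: Ey_mult degree_mult_eq Ey_nz)
        moreover have "degree (Ey (k, i0, ot) F) \<noteq> 0" using True free_iff_deg0 by blast
        moreover have "degree (Ey (k, i0, ot) G) \<noteq> 0" using \<open>(k, i0, ot) \<in> vars G\<close> free_iff_deg0 by blast
        moreover have "degree (Ey (k, i0, ot) B) \<le> 1" using dg i0 by (simp add: I_def)
        ultimately show False by linarith
      qed
      then show ?thesis using side[of G F, OF _ _ i0] FG by (simp add: mult.commute)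
    qed
  qed
qed




context net
begin

definition initf :: "nat \<Rightarrow> nat \<Rightarrow> mpoly" where
  "initf s = (if s = 1 then X else (\<lambda>j. if j = unique_node d P (ls ! (s - 1)) then 1 else 0))"
definition outf :: "nat \<Rightarrow> nat" where
  "outf s = (if s = n then i else unique_node d P (ls ! s))"
definition Q :: "nat \<Rightarrow> nat \<Rightarrow> nat \<Rightarrow> mpoly" where
  "Q s k j = LN (ls ! (s - 1)) (initf s) (k - ls ! (s - 1)) j"

abbreviation "Bs \<equiv> map (\<lambda>s. block_poly d L P x0 i (Suc s)) [0..<n]"

lemma block_eq: "1 \<le> s \<Longrightarrow> s \<le> n \<Longrightarrow> block_poly d L P x0 i s = Q s (ls ! s) (outf s)"
  unfolding block_poly_def Let_def Q_def initf_def outf_def using ls_len by simp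

lemma initfvars: "\<forall>j. vars (initf s j) = {}"
  by (simp add: initf_def)

lemma prodG: "1 \<le> t \<Longrightarrow> t \<le> n \<Longrightarrow>
  LN 1 X (ls ! t - 1) (outf t) = prod_list (map (\<lambda>s. block_poly d L P x0 i (Suc s)) [0..<t])"
proof (induct t)
  case 0 then show ?case by simp
next
  case (Suc t)
  show ?case
  proof (cases "t = 0")
    case True
    then show ?thesis using block_eq[of 1] Suc.prems by (simp add: Q_def initf_def ls0)
  next
    case False
    then have t: "1 \<le> t" "t < n" using Suc.prems by auto
    let ?c = "unique_node d P (ls ! t)"
    have tU: "ls ! t \<in> U" using ls_mid t by simp
    note un = U_node[OF tU]
    have ot: "outf t = ?c" using t by (simp add: outf_def)
    have mono: "ls ! t < ls ! Suc t" using ls_mono t by simp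
    define m1 where "m1 = ls ! t - 1"
    define m2 where "m2 = ls ! Suc t - ls ! t"
    have e1: "1 + m1 = ls ! t" using un by (simp add: m1_def)
    have e2: "ls ! Suc t - 1 = m1 + m2" using un mono by (simp add: m1_def m2_def)
    have act: "\<forall>j. (1 + m1, j) \<in> P \<longleftrightarrow> j = ?c" using un e1 by simp
    have "LN 1 X (m1 + m2) (outf (Suc t)) =
          LN 1 X m1 ?c * LN (1 + m1) (\<lambda>j. if j = ?c then 1 else 0) m2 (outf (Suc t))"
      by (rule LN_comp[OF act]) (use un e1 in \<open>auto simp: m1_def\<close>)
    also have "LN 1 X m1 ?c = prod_list (map (\<lambda>s. block_poly d L P x0 i (Suc s)) [0..<t])"
      using Suc.hyps t ot by (simp add: m1_def)
    also have "LN (1 + m1) (\<lambda>j. if j = ?c then 1 else 0) m2 (outf (Suc t)) = block_poly d L P x0 i (Suc t)"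
      using block_eq[of "Suc t"] Suc.prems False e1 by (simp add: Q_def initf_def m2_def)
    finally show ?thesis using e2 by simp
  qed
qed

lemma u_eq: "virtual_poly d L P x0 i L = prod_list Bs"
  using prodG[of n] lsn by (simp add: virtual_poly_def outf_def)

lemma Bs_nz: "s < n \<Longrightarrow> block_poly d L P x0 i (Suc s) \<noteq> 0"
proof
  assume s: "s < n" and z: "block_poly d L P x0 i (Suc s) = 0"
  have "0 \<in> set Bs" using s z by (metis (no_types, lifting) diff_zero length_map length_upt nth_map nth_mem nth_upt plus_nat.add_0)
  then have "prod_list Bs = 0" by (simp only: prod_list_zero_iff)
  then show False using u0 u_eq by simp
qed

lemma Bs_nz': "1 \<le> s \<Longrightarrow> s \<le> n \<Longrightarrow> block_poly d L P x0 i s \<noteq> 0"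
  using Bs_nz[of "s - 1"] by (simp add: Suc_pred')

lemma Q_Suc: "ls ! (s - 1) \<le> k \<Longrightarrow> Q s (Suc k) j =
   (if 2 \<le> Suc k \<and> Suc k < L \<and> (Suc k, j) \<notin> P then 0 else (\<Sum>i'<d k. Var (k, i', j) * Q s k i'))"
proof -
  assume a: "ls ! (s - 1) \<le> k"
  have e: "Suc k - ls ! (s - 1) = Suc (k - ls ! (s - 1))" "ls ! (s - 1) + Suc (k - ls ! (s - 1)) = Suc k"
    "ls ! (s - 1) + (k - ls ! (s - 1)) = k" using a by auto
  show ?thesis unfolding Q_def e(1) lin_net.simps e(2) e(3) ..
qed

lemma Q_vars: "ls ! (s - 1) \<le> k \<Longrightarrow>
  vars (Q s k j) \<subseteq> {v. ls ! (s - 1) \<le> fst v \<and> fst v < k \<and> (Suc (fst v) = k \<longrightarrow> snd (snd v) = j)}"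
  unfolding Q_def using vars_LN[OF initfvars, of d L P "ls ! (s - 1)" s "k - ls ! (s - 1)" j] by simp

lemma Q_N:
  assumes s: "1 \<le> s" "s \<le> n" and k: "ls ! (s - 1) \<le> k"
  shows "\<exists>c. LN 1 X (k - 1) j = c * Q s k j"
proof (cases "s = 1")
  case True
  then show ?thesis by (intro exI[of _ 1]) (simp add: Q_def initf_def ls0)
next
  case False
  let ?a = "ls ! (s - 1)"
  let ?c = "unique_node d P ?a"
  have aU: "?a \<in> U" using ls_mid s False by simp
  note un = U_node[OF aU]
  have act: "\<forall>j. (1 + (?a - 1), j) \<in> P \<longleftrightarrow> j = ?c" using un by simp
  have "LN 1 X ((?a - 1) + (k - ?a)) j = LN 1 X (?a - 1) ?c * LN (1 + (?a - 1)) (\<lambda>j. if j = ?c then 1 else 0) (k - ?a) j"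
    by (rule LN_comp[OF act]) (use un in auto)
  moreover have "(?a - 1) + (k - ?a) = k - 1" using un k by simp
  moreover have "1 + (?a - 1) = ?a" using un by simp
  ultimately show ?thesis using False by (simp add: Q_def initf_def)
qed

lemma Q_act: "1 \<le> s \<Longrightarrow> s \<le> n \<Longrightarrow> ls ! (s - 1) \<le> k \<Longrightarrow> (k, j) \<in> P \<Longrightarrow> Q s k j \<noteq> 0"
  using Q_N[of s k j] virtual_eval[of k j] by auto

lemma Q_inact: "ls ! (s - 1) < k \<Longrightarrow> 2 \<le> k \<Longrightarrow> k < L \<Longrightarrow> (k, j) \<notin> P \<Longrightarrow> Q s k j = 0"
proof -
  assume a: "ls ! (s - 1) < k" "2 \<le> k" "k < L" "(k, j) \<notin> P"
  obtain k' where k': "k = Suc k'" using a by (cases k) auto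
  show ?thesis using Q_Suc[of s k' j] a k' by simp
qed

lemma block_Q_zero:
  assumes s: "1 \<le> s" "s \<le> n" and k: "ls ! (s - 1) \<le> k" "k < ls ! s"
    and z: "\<forall>j<d k. Q s k j = 0"
  shows False
proof -
  let ?a = "ls ! (s - 1)"
  have "\<forall>j<d (?a + (k - ?a)). LN ?a (initf s) (k - ?a) j = 0" using z k by (simp add: Q_def)
  then have z1: "LN ?a (initf s) (Suc ((k - ?a) + (ls ! s - k - 1))) (outf s) = 0" by (rule LN_zero_prop)
  have e: "Suc ((k - ?a) + (ls ! s - k - 1)) = ls ! s - ?a" using k by simp
  have "LN ?a (initf s) (ls ! s - ?a) (outf s) = 0" using z1 unfolding e .
  then have "block_poly d L P x0 i s = 0" using block_eq[OF s] by (simp only: Q_def)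
  then show False using Bs_nz'[OF s] by simp
qed

lemma two_active:
  assumes s: "1 \<le> s" "s \<le> n" and k: "ls ! (s - 1) < k" "k < ls ! s"
  shows "\<exists>j1 j2. j1 \<noteq> j2 \<and> j1 < d k \<and> j2 < d k \<and> (k, j1) \<in> P \<and> (k, j2) \<in> P"
proof -
  let ?S = "{j. j < d k \<and> (k, j) \<in> P}"
  have kU: "k \<notin> U" using ls_gap[of "s - 1" k] s k by simp
  have r1: "1 \<le> ls ! (s - 1)" using ls_range[of "s - 1"] s by simp
  have r2: "ls ! s \<le> L" using ls_range[of s] s by simp
  have kr: "2 \<le> k" "k < L" using r1 r2 k by auto
  have c: "card ?S \<noteq> 1" using kU kr by (simp add: unique_layers_def)
  have ne: "?S \<noteq> {}"
  proof
    assume "?S = {}"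
    have "\<forall>j<d k. Q s k j = 0"
    proof (intro allI impI)
      fix j assume "j < d k"
      then have "(k, j) \<notin> P" using \<open>?S = {}\<close> by blast
      then show "Q s k j = 0" using Q_inact[OF k(1) kr] by blast
    qed
    then show False using block_Q_zero[OF s less_imp_le[OF k(1)] k(2)] by blast
  qed
  then obtain j1 where j1: "j1 \<in> ?S" by blast
  have "?S \<noteq> {j1}"
  proof
    assume "?S = {j1}"
    then have "card ?S = 1" by simp
    then show False using c by blast
  qed
  then obtain j2 where j2: "j2 \<in> ?S" "j2 \<noteq> j1" using j1 by blast
  then show ?thesis using j1 by blast
qed

lemma x_nz: "\<exists>l<d 1. x0 l \<noteq> 0"
proof (rule ccontr)
  assume "\<not> ?thesis"
  then have "\<forall>j<d (ls ! 0). Q 1 (ls ! 0) j = 0" by (simp add: Q_def initf_def ls0 Const_def)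
  moreover have "ls ! 0 < ls ! 1" using ls_mono[of 0 1] by simp
  ultimately show False using block_Q_zero[of 1 "ls ! 0"] by simp
qed

lemma CD:
  assumes s: "1 \<le> s" "s \<le> n"
  shows "ls ! (s - 1) + r < ls ! s \<Longrightarrow> \<forall>D. (\<forall>j<d (ls ! (s - 1) + r). D dvd Q s (ls ! (s - 1) + r) j) \<longrightarrow> D dvd 1"
proof (induct r)
  case 0
  show ?case
  proof (intro allI impI)
    fix D assume D: "\<forall>j<d (ls ! (s - 1) + 0). D dvd Q s (ls ! (s - 1) + 0) j"
    show "D dvd 1"
    proof (cases "s = 1")
      case True
      obtain l where l: "l < d 1" "x0 l \<noteq> 0" using x_nz by blast
      have "D dvd Const (x0 l)" using D l True by (simp add: Q_def initf_def ls0)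
      then show ?thesis using Const_unit[OF l(2)] dvd_trans by blast
    next
      case False
      have aU: "ls ! (s - 1) \<in> U" using ls_mid s False by simp
      have "unique_node d P (ls ! (s - 1)) < d (ls ! (s - 1))" using U_node[OF aU] by simp
      then have "D dvd 1" using D False by (auto simp: Q_def initf_def)
      then show ?thesis .
    qed
  qed
next
  case (Suc r)
  let ?a = "ls ! (s - 1)"
  let ?k = "?a + r"
  have lt: "?k < ls ! s" and lt1: "?k + 1 < ls ! s" using Suc.prems by auto
  have IH: "\<forall>D. (\<forall>j<d ?k. D dvd Q s ?k j) \<longrightarrow> D dvd 1" using Suc.hyps lt by blast
  show ?case
  proof (intro allI impI)
    fix D assume D: "\<forall>j<d (?a + Suc r). D dvd Q s (?a + Suc r) j"
    obtain j1 j2 where j: "j1 \<noteq> j2" "j1 < d (Suc ?k)" "j2 < d (Suc ?k)" "(Suc ?k, j1) \<in> P" "(Suc ?k, j2) \<in> P"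
      using two_active[OF s, of "Suc ?k"] lt1 by auto
    have Qj1: "Q s (Suc ?k) j1 = (\<Sum>i'<d ?k. Var (?k, i', j1) * Q s ?k i')"
      using Q_Suc[of s ?k j1] j(4) by simp
    have nz2: "Q s (Suc ?k) j2 \<noteq> 0" using Q_act[OF s, of "Suc ?k" j2] j(5) by simp
    have Dj1: "D dvd Q s (Suc ?k) j1" and Dj2: "D dvd Q s (Suc ?k) j2" using D j by auto
    have "D dvd Q s ?k i0" if i0: "i0 < d ?k" for i0
    proof -
      have "(?k, i0, j1) \<notin> vars (Q s (Suc ?k) j2)" using Q_vars[of s "Suc ?k" j2] j(1) by auto
      then have fD: "(?k, i0, j1) \<notin> vars D" using vars_dvd'[OF Dj2 nz2] by blast
      obtain H where H: "Q s (Suc ?k) j1 = D * H" using Dj1 by blast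
      have fr: "\<forall>i'<d ?k. (?k, i0, j1) \<notin> vars (Q s ?k i')" using Q_vars[of s ?k] by fastforce
      have "Q s ?k i0 = coeff (Ey (?k, i0, j1) (Q s (Suc ?k) j1)) 1"
        using coeff_extract[OF i0 fr] Qj1 by simp
      also have "\<dots> = coeff (Ey (?k, i0, j1) H) 1 * D" using H coeff1_mult_free[OF fD, of H]
        by (simp add: mult.commute)
      finally show ?thesis by simp
    qed
    then show "D dvd 1" using IH by blast
  qed
qed

lemma block_irr:
  assumes s: "1 \<le> s" "s \<le> n"
  shows "irreducible (block_poly d L P x0 i s)"
proof -
  let ?a = "ls ! (s - 1)" and ?b = "ls ! s"
  have ab: "?a < ?b" using ls_mono[of "s - 1" s] s by simp
  define k where "k = ?b - 1"
  have kb: "?b = Suc k" "?a \<le> k" using ab by (auto simp: k_def)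
  let ?B = "block_poly d L P x0 i s"
  have B0: "?B \<noteq> 0" using Bs_nz'[OF s] .
  have "?B = Q s (Suc k) (outf s)" using block_eq[OF s] kb by simp
  then have Bsum: "?B = (\<Sum>i'<d k. Var (k, i', outf s) * Q s k i')"
    using Q_Suc[OF kb(2), of "outf s"] B0 by (simp split: if_splits)
  show ?thesis
  proof (rule top_irr[OF Bsum B0])
    show "\<forall>ia<d k. \<forall>i'<d k. (k, i', outf s) \<notin> vars (Q s k ia)" using Q_vars[OF kb(2)] by fastforce
    show "\<forall>D. (\<forall>ia<d k. D dvd Q s k ia) \<longrightarrow> D dvd 1"
      using CD[OF s, of "k - ?a"] kb by simp
  qed
qed

lemma block_vars: "1 \<le> s \<Longrightarrow> s \<le> n \<Longrightarrow>
   vars (block_poly d L P x0 i s) \<subseteq> {v. ls ! (s - 1) \<le> fst v \<and> fst v < ls ! s}"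
  using block_eq[of s] Q_vars[of s "ls ! s" "outf s"] ls_mono[of "s - 1" s] by fastforce

lemma Bs_nth: "s < n \<Longrightarrow> Bs ! s = block_poly d L P x0 i (Suc s)"
  by (simp del: upt_Suc)

lemma Bs_len: "length Bs = n"
  by (simp del: upt_Suc)

lemma pdisj_Bs: "pdisj Bs"
  unfolding pdisj_def
proof (intro allI impI)
  fix s t assume st: "s < length Bs" "t < length Bs" "s \<noteq> t"
  have sn: "s < n" "t < n" using st Bs_len by auto
  have vs: "vars (Bs ! s) \<subseteq> {v. ls ! s \<le> fst v \<and> fst v < ls ! Suc s}"
    using block_vars[of "Suc s"] sn Bs_nth[of s] by simp
  have vt: "vars (Bs ! t) \<subseteq> {v. ls ! t \<le> fst v \<and> fst v < ls ! Suc t}"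
    using block_vars[of "Suc t"] sn Bs_nth[of t] by simp
  have "ls ! Suc s \<le> ls ! t \<or> ls ! Suc t \<le> ls ! s"
  proof (cases "s < t")
    case True
    then show ?thesis using ls_mono[of "Suc s" t] sn by (cases "Suc s = t") auto
  next
    case False
    then have "t < s" using st by simp
    then show ?thesis using ls_mono[of "Suc t" s] sn by (cases "Suc t = s") auto
  qed
  then show "vars (Bs ! s) \<inter> vars (Bs ! t) = {}" using vs vt by fastforce
qed

lemma ml_Bs: "\<forall>y. degree (Ey y (prod_list Bs)) \<le> 1"
proof
  fix y
  have "\<forall>B\<in>set Bs. degree (Ey y B) \<le> 1"
  proof
    fix B assume "B \<in> set Bs"
    then obtain s where s: "s < n" "B = block_poly d L P x0 i (Suc s)" by (auto simp del: upt_Suc)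
    then show "degree (Ey y B) \<le> 1" using block_eq[of "Suc s"] deg_LN[OF initfvars] by (simp add: Q_def)
  qed
  then show "degree (Ey y (prod_list Bs)) \<le> 1" by (rule ml_from_blocks[OF pdisj_Bs])
qed

lemma main:
  "(\<forall>n'. (\<exists>gs. length gs = n' \<and> (\<forall>g\<in>set gs. irreducible g) \<and> prod_list gs = virtual_poly d L P x0 i L)
              \<longleftrightarrow> card (unique_layers d L P) + 1 = n')
   \<and> (\<forall>gs. (\<forall>g\<in>set gs. irreducible g) \<and> prod_list gs = virtual_poly d L P x0 i L \<longrightarrow>
            (\<exists>p. bij_betw p {..<length gs} {..<length gs} \<and>
                 (\<forall>s<length gs. \<exists>c. c \<noteq> 0 \<and>
                     gs ! p s = Const c * block_poly d L P x0 i (Suc s))))"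
proof -
  have irrB: "\<forall>B\<in>set Bs. irreducible B" using block_irr by (auto simp del: upt_Suc)
  note U = uniq_fact[OF irrB pdisj_Bs ml_Bs]
  show ?thesis
  proof (intro conjI allI impI iffI)
    fix n' assume "\<exists>gs. length gs = n' \<and> (\<forall>g\<in>set gs. irreducible g) \<and> prod_list gs = virtual_poly d L P x0 i L"
    then obtain gs where gs: "length gs = n'" "\<forall>g\<in>set gs. irreducible g" "prod_list gs = virtual_poly d L P x0 i L"
      by blast
    then show "n = n'" using U[of gs] u_eq by simp
  next
    fix n' assume "n = n'"
    then show "\<exists>gs. length gs = n' \<and> (\<forall>g\<in>set gs. irreducible g) \<and> prod_list gs = virtual_poly d L P x0 i L"
      using irrB u_eq by (intro exI[of _ Bs]) simp
  next
    fix gs assume gs: "(\<forall>g\<in>set gs. irreducible g) \<and> prod_list gs = virtual_poly d L P x0 i L"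
    then obtain p where p: "bij_betw p {..<length gs} {..<length gs}"
      "\<forall>s<length gs. \<exists>c. c \<noteq> 0 \<and> gs ! p s = Const c * Bs ! s" and len: "length gs = n"
      using U[of gs] u_eq by auto
    show "\<exists>p. bij_betw p {..<length gs} {..<length gs} \<and>
            (\<forall>s<length gs. \<exists>c. c \<noteq> 0 \<and> gs ! p s = Const c * block_poly d L P x0 i (Suc s))"
      using p len Bs_nth by (intro exI[of _ p]) (auto simp del: upt_Suc)
  qed
qed

end


theorem theorem2p8:
  fixes d :: "nat \<Rightarrow> nat" and L :: nat and x0 :: "nat \<Rightarrow> real"
    and w0 :: "nat \<Rightarrow> nat \<Rightarrow> nat \<Rightarrow> real" and i :: nat
    and P :: "(nat \<times> nat) set" and u :: mpoly
  assumes "2 \<le> L" and "i < d L"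
    and "P = activation_set d L w0 x0"
    and "u = virtual_poly d L P x0 i L"
    and "u \<noteq> 0"
  shows "(\<forall>n. (\<exists>gs. length gs = n \<and> (\<forall>g\<in>set gs. irreducible g) \<and> prod_list gs = u)
              \<longleftrightarrow> card (unique_layers d L P) + 1 = n)
       \<and> (\<forall>gs. (\<forall>g\<in>set gs. irreducible g) \<and> prod_list gs = u \<longrightarrow>
            (\<exists>p. bij_betw p {..<length gs} {..<length gs} \<and>
                 (\<forall>s<length gs. \<exists>c. c \<noteq> 0 \<and>
                     gs ! p s = Const c * block_poly d L P x0 i (Suc s))))"
proof -
  interpret net d L x0 w0 i P
    using assms by unfold_locales auto
  show ?thesis using main assms(4) by simp
qed

end
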